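(* Let $B$ and $Q$ be algebras in the same signature $\tau$, suppose $B$ is abelian and has a Mal'cev term $m$ (a $\tau$-term with $B\models m(x,y,y)=x$ and $m(y,y,x)=x$), fix $0\in B$, and let $x+y:=m^B(x,0,y)$. Let $T_f:Q^{\operatorname{ar}f}\to B$ ($f\in\tau$) be arbitrary maps, and let $q:B\otimes^{T}Q\to Q$ be the projection $(b,x)\mapsto x$. Then $[1,\ker q]=0$ in $B\otimes^{T}Q$.
   Context: All algebras are in the sense of universal algebra. For congruences $\alpha,\beta$ of an algebra, $[\alpha,\beta]$ is the term-condition (TC) commutator; $0$ is the equality relation and $1$ the total relation. An algebra is abelian if $[1,1]=0$. Given algebras $B,Q$ in the same signature $\tau$, a binary operation $+$ on $B$, and maps $T_f:Q^{\operatorname{ar}f}\to B$ ($f\in\tau$), the algebra $B\otimes^{T}Q$ has universe $B\times Q$ and operations $F_f((b_1,q_1),\dots,(b_n,q_n))=\big(f^B(b_1,\dots,b_n)+T_f(q_1,\dots,q_n),\,f^Q(q_1,\dots,q_n)\big)$. *)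

theory Defs
  imports Main
begin

text \<open>A signature is given by a type 'f of operation
symbols together with an arity function ar :: 'f \<Rightarrow> nat. An algebra is a
universe together with an interpretation of every operation symbol (applied to
argument lists; only lists of length ar f from the universe matter).\<close>

record ('a, 'f) alg =
  univ :: "'a set"
  opn  :: "'f \<Rightarrow> 'a list \<Rightarrow> 'a"

definition is_algebra :: "('f \<Rightarrow> nat) \<Rightarrow> ('a, 'f) alg \<Rightarrow> bool" where
  "is_algebra ar A \<longleftrightarrow> univ A \<noteq> {} \<and>
     (\<forall>f xs. xs \<in> lists (univ A) \<and> length xs = ar f \<longrightarrow> opn A f xs \<in> univ A)"

datatype ('f, 'v) trm = Var 'v | Fn 'f "('f, 'v) trm list"

fun wf_trm :: "('f \<Rightarrow> nat) \<Rightarrow> ('f, 'v) trm \<Rightarrow> bool" where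
  "wf_trm ar (Var v) = True"
| "wf_trm ar (Fn f ts) = (length ts = ar f \<and> (\<forall>t \<in> set ts. wf_trm ar t))"

fun vars_trm :: "('f, 'v) trm \<Rightarrow> 'v set" where
  "vars_trm (Var v) = {v}"
| "vars_trm (Fn f ts) = (\<Union>t \<in> set ts. vars_trm t)"

fun eval :: "('a, 'f) alg \<Rightarrow> ('v \<Rightarrow> 'a) \<Rightarrow> ('f, 'v) trm \<Rightarrow> 'a" where
  "eval A \<rho> (Var v) = \<rho> v"
| "eval A \<rho> (Fn f ts) = opn A f (map (eval A \<rho>) ts)"

definition term_op3 :: "('a, 'f) alg \<Rightarrow> ('f, nat) trm \<Rightarrow> 'a \<Rightarrow> 'a \<Rightarrow> 'a \<Rightarrow> 'a" where
  "term_op3 A m x y z = eval A (\<lambda>v. if v = 0 then x else if v = 1 then y else z) m"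

definition is_malcev_term :: "('f \<Rightarrow> nat) \<Rightarrow> ('a, 'f) alg \<Rightarrow> ('f, nat) trm \<Rightarrow> bool" where
  "is_malcev_term ar A m \<longleftrightarrow> wf_trm ar m \<and> vars_trm m \<subseteq> {0, 1, 2} \<and>
     (\<forall>x \<in> univ A. \<forall>y \<in> univ A. term_op3 A m x y y = x \<and> term_op3 A m y y x = x)"

definition congruence :: "('f \<Rightarrow> nat) \<Rightarrow> ('a, 'f) alg \<Rightarrow> ('a \<times> 'a) set \<Rightarrow> bool" where
  "congruence ar A \<theta> \<longleftrightarrow> equiv (univ A) \<theta> \<and>
     (\<forall>f xs ys. length xs = ar f \<and> length ys = ar f \<and> list_all2 (\<lambda>x y. (x, y) \<in> \<theta>) xs ys
        \<longrightarrow> (opn A f xs, opn A f ys) \<in> \<theta>)"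

definition zero_con :: "('a, 'f) alg \<Rightarrow> ('a \<times> 'a) set" where
  "zero_con A = Id_on (univ A)"

definition one_con :: "('a, 'f) alg \<Rightarrow> ('a \<times> 'a) set" where
  "one_con A = univ A \<times> univ A"

text \<open>Term condition: C(\<alpha>,\<beta>;\<delta>) ("\<alpha> centralizes \<beta> modulo \<delta>"): for every term
t(x1..xn, y1..ym) (the x-variables are those in X), all tuples a \<alpha> b and c \<beta> d,
t(a,c) \<delta> t(a,d) implies t(b,c) \<delta> t(b,d).\<close>
definition centralizes :: "('f \<Rightarrow> nat) \<Rightarrow> ('a, 'f) alg \<Rightarrow> ('a \<times> 'a) set \<Rightarrow> ('a \<times> 'a) set
    \<Rightarrow> ('a \<times> 'a) set \<Rightarrow> bool" where
  "centralizes ar A \<alpha> \<beta> \<delta> \<longleftrightarrow>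
     (\<forall>(t :: ('f, nat) trm) (X :: nat set) a b c d.
        wf_trm ar t \<longrightarrow>
        (\<forall>v. (a v, b v) \<in> \<alpha>) \<longrightarrow> (\<forall>v. (c v, d v) \<in> \<beta>) \<longrightarrow>
        (eval A (\<lambda>v. if v \<in> X then a v else c v) t,
         eval A (\<lambda>v. if v \<in> X then a v else d v) t) \<in> \<delta> \<longrightarrow>
        (eval A (\<lambda>v. if v \<in> X then b v else c v) t,
         eval A (\<lambda>v. if v \<in> X then b v else d v) t) \<in> \<delta>)"

definition tc_comm :: "('f \<Rightarrow> nat) \<Rightarrow> ('a, 'f) alg \<Rightarrow> ('a \<times> 'a) set \<Rightarrow> ('a \<times> 'a) set
    \<Rightarrow> ('a \<times> 'a) set" where
  "tc_comm ar A \<alpha> \<beta> = \<Inter> {\<delta>. congruence ar A \<delta> \<and> centralizes ar A \<alpha> \<beta> \<delta>}"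

definition abelian :: "('f \<Rightarrow> nat) \<Rightarrow> ('a, 'f) alg \<Rightarrow> bool" where
  "abelian ar A \<longleftrightarrow> tc_comm ar A (one_con A) (one_con A) = zero_con A"

definition tensor :: "('b, 'f) alg \<Rightarrow> ('b \<Rightarrow> 'b \<Rightarrow> 'b) \<Rightarrow> ('f \<Rightarrow> 'q list \<Rightarrow> 'b)
    \<Rightarrow> ('q, 'f) alg \<Rightarrow> ('b \<times> 'q, 'f) alg" where
  "tensor B add T Q =
     \<lparr> univ = univ B \<times> univ Q,
       opn = (\<lambda>f ps. (add (opn B f (map fst ps)) (T f (map snd ps)), opn Q f (map snd ps))) \<rparr>"

definition ker_proj :: "('b \<times> 'q, 'f) alg \<Rightarrow> (('b \<times> 'q) \<times> ('b \<times> 'q)) set" where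
  "ker_proj A = {(p, p'). p \<in> univ A \<and> p' \<in> univ A \<and> snd p = snd p'}"

end

theory Submission
  imports Defs
begin

fun subst :: "('v \<Rightarrow> ('f,'w) trm) \<Rightarrow> ('f,'v) trm \<Rightarrow> ('f,'w) trm" where
  "subst g (Var v) = g v"
| "subst g (Fn f ts) = Fn f (map (subst g) ts)"

lemma eval_subst: "eval A \<rho> (subst g t) = eval A (\<lambda>v. eval A \<rho> (g v)) t"
  by (induction t) (auto intro: arg_cong[where f="opn A _"])

lemma wf_subst: "wf_trm ar t \<Longrightarrow> (\<forall>v. wf_trm ar (g v)) \<Longrightarrow> wf_trm ar (subst g t)"
  by (induction t) auto

lemma eval_map: "eval A \<rho> (map_trm id h t) = eval A (\<rho> \<circ> h) t"
  by (induction t) (auto intro: arg_cong[where f="opn A _"])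

lemma wf_map: "wf_trm ar (map_trm id h t) = wf_trm ar t"
  by (induction t) auto

lemma eval_cong: "(\<forall>v\<in>vars_trm t. \<rho> v = \<rho>' v) \<Longrightarrow> eval A \<rho> t = eval A \<rho>' t"
  by (induction t) (auto intro!: arg_cong[where f="opn A _"])

lemma finite_vars: "finite (vars_trm t)"
  by (induction t) auto

lemma eval_closed:
  assumes "\<forall>f xs. xs \<in> lists U \<and> length xs = ar f \<longrightarrow> opn A f xs \<in> U"
    and "\<forall>v. \<rho> v \<in> U"
  shows "wf_trm ar t \<Longrightarrow> eval A \<rho> t \<in> U"
  by (induction t) (auto intro!: assms(1)[rule_format] assms(2)[rule_format])

lemma centralizes_tc: "centralizes ar A \<alpha> \<beta> (tc_comm ar A \<alpha> \<beta>)"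
  unfolding centralizes_def tc_comm_def by blast

fun lift :: "('f,nat) trm \<Rightarrow> ('f,nat) trm \<Rightarrow> ('f, ('f,nat) trm + nat) trm" where
  "lift m (Var v) = Var (Inr v)"
| "lift m (Fn f ts) = subst (\<lambda>i. if i = 0 then Fn f (map (lift m) ts)
      else if i = 1 then Var (Inl (Var 0)) else Var (Inl (Fn f ts))) m"

lemma wf_lift: "wf_trm ar m \<Longrightarrow> wf_trm ar t \<Longrightarrow> wf_trm ar (lift m t)"
  by (induction t) (auto intro!: wf_subst)

lemma opn_tensor: "opn (tensor B add T Q) f ps = (add (opn B f (map fst ps)) (T f (map snd ps)), opn Q f (map snd ps))"
  by (simp add: tensor_def)

lemma univ_tensor: "univ (tensor B add T Q) = univ B \<times> univ Q"
  by (simp add: tensor_def)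

definition W :: "('f \<Rightarrow> nat) \<Rightarrow> ('q,'f) alg \<Rightarrow> ('f \<Rightarrow> 'q list \<Rightarrow> 'b) \<Rightarrow> 'b \<Rightarrow> (nat \<Rightarrow> 'q)
   \<Rightarrow> ('f,nat) trm \<Rightarrow> 'b" where
  "W ar Q T z \<sigma> s = (case s of Var _ \<Rightarrow> z | Fn f ts \<Rightarrow>
     if map (eval Q \<sigma>) ts \<in> lists (univ Q) \<and> length ts = ar f then T f (map (eval Q \<sigma>) ts) else z)"

lemma key:
  assumes Q: "is_algebra ar Q" and s: "\<forall>v. snd (\<rho> v) \<in> univ Q"
  shows "wf_trm ar t \<Longrightarrow> eval (tensor B (\<lambda>x y. term_op3 B m x z y) T Q) \<rho> t
    = (eval B (case_sum (W ar Q T z (snd \<circ> \<rho>)) (fst \<circ> \<rho>)) (lift m t), eval Q (snd \<circ> \<rho>) t)"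
proof (induction t)
  case (Var x)
  then show ?case by simp
next
  case (Fn f ts)
  let ?A = "tensor B (\<lambda>x y. term_op3 B m x z y) T Q"
  let ?r = "case_sum (W ar Q T z (snd \<circ> \<rho>)) (fst \<circ> \<rho>)"
  have IH: "\<And>s. s \<in> set ts \<Longrightarrow> eval ?A \<rho> s = (eval B ?r (lift m s), eval Q (snd \<circ> \<rho>) s)"
    using Fn by (simp add: comp_def)
  have m1: "map fst (map (eval ?A \<rho>) ts) = map (\<lambda>s. eval B ?r (lift m s)) ts"
    using IH by auto
  have m2: "map snd (map (eval ?A \<rho>) ts) = map (eval Q (snd \<circ> \<rho>)) ts"
    by (simp add: IH cong: map_cong)
  have cl: "map (eval Q (snd \<circ> \<rho>)) ts \<in> lists (univ Q)"
    using Fn.prems Q s by (auto simp: is_algebra_def intro!: eval_closed[where ar=ar])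
  have Wv: "W ar Q T z (snd \<circ> \<rho>) (Fn f ts) = T f (map (eval Q (snd \<circ> \<rho>)) ts)"
    using cl Fn.prems by (simp add: W_def)
  have "eval B ?r (lift m (Fn f ts)) = term_op3 B m (opn B f (map (\<lambda>s. eval B ?r (lift m s)) ts)) z
      (T f (map (eval Q (snd \<circ> \<rho>)) ts))"
    unfolding term_op3_def lift.simps eval_subst
    apply (rule arg_cong[where f="\<lambda>r. eval B r m"])
    apply (rule ext)
    using Wv by (simp add: W_def comp_def)
  moreover have "eval ?A \<rho> (Fn f ts) = (term_op3 B m (opn B f (map fst (map (eval ?A \<rho>) ts))) z
     (T f (map snd (map (eval ?A \<rho>) ts))), opn Q f (map snd (map (eval ?A \<rho>) ts)))"
    by (simp only: eval.simps opn_tensor)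
  moreover have "eval Q (snd \<circ> \<rho>) (Fn f ts) = opn Q f (map (eval Q (snd \<circ> \<rho>)) ts)" by simp
  ultimately show ?case
    by (simp only: m1 m2)
qed


lemma tc_any:
  fixes t :: "('f,'w) trm"
  assumes C: "centralizes ar B (one_con B) (one_con B) (zero_con B)"
    and alg: "is_algebra ar B"
    and wf: "wf_trm ar t"
    and U: "\<forall>v. a v \<in> univ B \<and> b v \<in> univ B \<and> c v \<in> univ B \<and> d v \<in> univ B"
    and hyp: "eval B (\<lambda>v. if v \<in> X then a v else c v) t = eval B (\<lambda>v. if v \<in> X then a v else d v) t"
  shows "eval B (\<lambda>v. if v \<in> X then b v else c v) t = eval B (\<lambda>v. if v \<in> X then b v else d v) t"
proof -
  obtain h :: "'w \<Rightarrow> nat" and n where h: "inj_on h (vars_trm t)"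
    using finite_imp_inj_to_nat_seg[OF finite_vars[of t]] by blast
  define g where "g = inv_into (vars_trm t) h"
  have gh: "\<And>w. w \<in> vars_trm t \<Longrightarrow> g (h w) = w" using h unfolding g_def by (rule inv_into_f_f)
  define X2 where "X2 = h ` (X \<inter> vars_trm t)"
  have hX: "(h w \<in> X2) = (w \<in> X)" if w: "w \<in> vars_trm t" for w
  proof -
    have "(h w \<in> h ` (X \<inter> vars_trm t)) = (w \<in> X \<inter> vars_trm t)"
      by (rule inj_on_image_mem_iff[OF h w]) auto
    thus ?thesis using w by (simp add: X2_def)
  qed
  define t2 where "t2 = map_trm id h t"
  have ev: "\<And>p q. eval B (\<lambda>n. if n \<in> X2 then p (g n) else q (g n)) t2
                = eval B (\<lambda>v. if v \<in> X then p v else q v) t"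
    unfolding t2_def eval_map by (rule eval_cong) (auto simp: gh hX)
  have wf2: "wf_trm ar t2" using wf by (simp add: t2_def wf_map)
  have cl: "\<forall>f xs. xs \<in> lists (univ B) \<and> length xs = ar f \<longrightarrow> opn B f xs \<in> univ B"
    using alg by (simp add: is_algebra_def)
  have p1: "\<And>v. (a (g v), b (g v)) \<in> one_con B" using U by (simp add: one_con_def)
  have p2: "\<And>v. (c (g v), d (g v)) \<in> one_con B" using U by (simp add: one_con_def)
  have inU: "eval B (\<lambda>v. if v \<in> X then a v else c v) t \<in> univ B"
    by (rule eval_closed[OF cl _ wf]) (simp add: U)
  have "(eval B (\<lambda>n. if n \<in> X2 then a (g n) else c (g n)) t2,
          eval B (\<lambda>n. if n \<in> X2 then a (g n) else d (g n)) t2) \<in> zero_con B"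
    unfolding zero_con_def ev[of a c] ev[of a d] hyp[symmetric]
    by (rule Id_onI) (rule inU)
  hence "(eval B (\<lambda>n. if n \<in> X2 then b (g n) else c (g n)) t2,
          eval B (\<lambda>n. if n \<in> X2 then b (g n) else d (g n)) t2) \<in> zero_con B"
    by (rule C[unfolded centralizes_def, rule_format, OF wf2 p1 p2])
  thus ?thesis using ev[of b c] ev[of b d] by (auto simp: zero_con_def Id_on_def)
qed


theorem lemma2p7:
  fixes ar :: "'f \<Rightarrow> nat"
    and B :: "('b, 'f) alg" and Q :: "('q, 'f) alg"
    and m :: "('f, nat) trm" and z :: 'b
    and T :: "'f \<Rightarrow> 'q list \<Rightarrow> 'b"
  assumes "is_algebra ar B" and "is_algebra ar Q"
    and "abelian ar B"
    and "is_malcev_term ar B m"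
    and "z \<in> univ B"
    and "\<forall>f qs. qs \<in> lists (univ Q) \<and> length qs = ar f \<longrightarrow> T f qs \<in> univ B"
  shows "tc_comm ar (tensor B (\<lambda>x y. term_op3 B m x z y) T Q)
           (one_con (tensor B (\<lambda>x y. term_op3 B m x z y) T Q))
           (ker_proj (tensor B (\<lambda>x y. term_op3 B m x z y) T Q))
         = zero_con (tensor B (\<lambda>x y. term_op3 B m x z y) T Q)"
proof -
  let ?A = "tensor B (\<lambda>x y. term_op3 B m x z y) T Q"
  note algB = assms(1) and algQ = assms(2) and zB = assms(5) and TB = assms(6)
  have wfm: "wf_trm ar m" using assms(4) by (simp add: is_malcev_term_def)
  have clB: "\<forall>f xs. xs \<in> lists (univ B) \<and> length xs = ar f \<longrightarrow> opn B f xs \<in> univ B"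
    using algB by (simp add: is_algebra_def)
  have clQ: "\<forall>f xs. xs \<in> lists (univ Q) \<and> length xs = ar f \<longrightarrow> opn Q f xs \<in> univ Q"
    using algQ by (simp add: is_algebra_def)
  have addcl: "\<And>x y. x \<in> univ B \<Longrightarrow> y \<in> univ B \<Longrightarrow> term_op3 B m x z y \<in> univ B"
    unfolding term_op3_def by (rule eval_closed[OF clB _ wfm]) (simp add: zB)
  have clA: "\<forall>f xs. xs \<in> lists (univ ?A) \<and> length xs = ar f \<longrightarrow> opn ?A f xs \<in> univ ?A"
  proof (intro allI impI)
    fix f xs assume xs: "xs \<in> lists (univ ?A) \<and> length xs = ar f"
    have s: "set xs \<subseteq> univ B \<times> univ Q" using xs by (auto simp: univ_tensor lists_eq_set)
    have 1: "map fst xs \<in> lists (univ B)" "map snd xs \<in> lists (univ Q)"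
    proof -
      have "\<forall>p\<in>set xs. fst p \<in> univ B \<and> snd p \<in> univ Q" using s mem_Times_iff by blast
      thus "map fst xs \<in> lists (univ B)" "map snd xs \<in> lists (univ Q)" by auto
    qed
    have l: "length (map fst xs) = ar f" "length (map snd xs) = ar f" using xs by simp_all
    have 2: "opn B f (map fst xs) \<in> univ B" "T f (map snd xs) \<in> univ B"
      "opn Q f (map snd xs) \<in> univ Q"
      using clB[rule_format, OF conjI[OF 1(1) l(1)]] TB[rule_format, OF conjI[OF 1(2) l(2)]]
        clQ[rule_format, OF conjI[OF 1(2) l(2)]] by simp_all
    show "opn ?A f xs \<in> univ ?A"
      unfolding opn_tensor univ_tensor using 2 addcl by simp
  qed
  have Cab: "centralizes ar B (one_con B) (one_con B) (zero_con B)"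
    using centralizes_tc[of ar B "one_con B" "one_con B"] assms(3) by (simp add: abelian_def)
  have cong0: "congruence ar ?A (zero_con ?A)"
    unfolding congruence_def zero_con_def
  proof (intro conjI allI impI)
    show "equiv (univ ?A) (Id_on (univ ?A))"
      by (auto simp: equiv_def refl_on_def sym_def trans_def)
  next
    fix f xs ys assume h: "length xs = ar f \<and> length ys = ar f \<and>
       list_all2 (\<lambda>x y. (x, y) \<in> Id_on (univ ?A)) xs ys"
    hence "list_all2 (=) xs ys" by (auto elim: list_all2_mono)
    hence "xs = ys" by (simp add: list.rel_eq)
    moreover have "xs \<in> lists (univ ?A)"
    proof -
      have "\<forall>x\<in>set xs. x \<in> univ ?A"
      proof
        fix x assume "x \<in> set xs"
        then obtain i where i: "i < length xs" "x = xs ! i" by (auto simp: in_set_conv_nth)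
        hence "(xs ! i, ys ! i) \<in> Id_on (univ ?A)" using h by (simp add: list_all2_conv_all_nth)
        thus "x \<in> univ ?A" using i Id_on_iff by metis
      qed
      thus ?thesis by auto
    qed
    ultimately show "(opn ?A f xs, opn ?A f ys) \<in> Id_on (univ ?A)"
      using clA[rule_format, of xs f] h by (auto intro: Id_onI)
  qed
  have cent: "centralizes ar ?A (one_con ?A) (ker_proj ?A) (zero_con ?A)"
    unfolding centralizes_def
  proof (intro allI impI)
    fix t :: "('f,nat) trm" and X :: "nat set" and a b c d
    assume wf: "wf_trm ar t" and ab: "\<forall>v. (a v, b v) \<in> one_con ?A"
      and cd: "\<forall>v. (c v, d v) \<in> ker_proj ?A"
      and hyp: "(eval ?A (\<lambda>v. if v \<in> X then a v else c v) t,
                 eval ?A (\<lambda>v. if v \<in> X then a v else d v) t) \<in> zero_con ?A"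
    have aU: "\<And>v. a v \<in> univ B \<times> univ Q" "\<And>v. b v \<in> univ B \<times> univ Q"
      using ab by (auto simp: one_con_def univ_tensor)
    have cU: "\<And>v. c v \<in> univ B \<times> univ Q" "\<And>v. d v \<in> univ B \<times> univ Q"
      "\<And>v. snd (c v) = snd (d v)"
      using cd by (auto simp: ker_proj_def univ_tensor)
    define \<sigma>a where "\<sigma>a = (\<lambda>v. if v \<in> X then snd (a v) else snd (c v))"
    define \<sigma>b where "\<sigma>b = (\<lambda>v. if v \<in> X then snd (b v) else snd (c v))"
    have sa1: "snd \<circ> (\<lambda>v. if v \<in> X then a v else c v) = \<sigma>a" by (auto simp: \<sigma>a_def)
    have sa2: "snd \<circ> (\<lambda>v. if v \<in> X then a v else d v) = \<sigma>a" by (auto simp: \<sigma>a_def cU(3))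
    have sb1: "snd \<circ> (\<lambda>v. if v \<in> X then b v else c v) = \<sigma>b" by (auto simp: \<sigma>b_def)
    have sb2: "snd \<circ> (\<lambda>v. if v \<in> X then b v else d v) = \<sigma>b" by (auto simp: \<sigma>b_def cU(3))
    have key': "\<And>p q. (\<forall>v. p v \<in> univ B \<times> univ Q) \<Longrightarrow> (\<forall>v. q v \<in> univ B \<times> univ Q) \<Longrightarrow>
       eval ?A (\<lambda>v. if v \<in> X then p v else q v) t =
       (eval B (case_sum (W ar Q T z (snd \<circ> (\<lambda>v. if v \<in> X then p v else q v)))
                  (fst \<circ> (\<lambda>v. if v \<in> X then p v else q v))) (lift m t),
        eval Q (snd \<circ> (\<lambda>v. if v \<in> X then p v else q v)) t)"
      by (rule key[OF algQ _ wf]) (auto simp: mem_Times_iff)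
    have Wcl: "\<And>\<sigma> s. W ar Q T z \<sigma> s \<in> univ B"
      using zB TB by (auto simp: W_def split: trm.split)
    define X' :: "(('f,nat) trm + nat) set" where "X' = range Inl \<union> Inr ` X"
    define a' where "a' = case_sum (W ar Q T z \<sigma>a) (fst \<circ> a)"
    define b' where "b' = case_sum (W ar Q T z \<sigma>b) (fst \<circ> b)"
    define c' :: "('f,nat) trm + nat \<Rightarrow> 'b" where "c' = case_sum (\<lambda>_. z) (fst \<circ> c)"
    define d' :: "('f,nat) trm + nat \<Rightarrow> 'b" where "d' = case_sum (\<lambda>_. z) (fst \<circ> d)"
    have eqv: "\<And>p q (W0 :: ('f,nat) trm \<Rightarrow> 'b). (\<lambda>w. if w \<in> X' then case_sum W0 (fst \<circ> p) w else case_sum (\<lambda>_. z) (fst \<circ> q) w)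
        = case_sum W0 (fst \<circ> (\<lambda>v. if v \<in> X then p v else q v))"
    proof
      fix p q W0 w show "(if w \<in> X' then case_sum W0 (fst \<circ> p) w else case_sum (\<lambda>_. z) (fst \<circ> q) w)
        = case_sum W0 (fst \<circ> (\<lambda>v. if v \<in> X then p v else q v)) w"
        by (cases w) (auto simp: X'_def)
    qed
    have U': "\<forall>v. a' v \<in> univ B \<and> b' v \<in> univ B \<and> c' v \<in> univ B \<and> d' v \<in> univ B"
    proof
      fix v show "a' v \<in> univ B \<and> b' v \<in> univ B \<and> c' v \<in> univ B \<and> d' v \<in> univ B"
        using aU cU zB Wcl by (cases v) (auto simp: a'_def b'_def c'_def d'_def mem_Times_iff)
    qed
    have hA: "eval ?A (\<lambda>v. if v \<in> X then a v else c v) t = eval ?A (\<lambda>v. if v \<in> X then a v else d v) t"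
      using hyp by (simp add: zero_con_def Id_on_iff)
    hence "eval B (\<lambda>w. if w \<in> X' then a' w else c' w) (lift m t)
         = eval B (\<lambda>w. if w \<in> X' then a' w else d' w) (lift m t)"
      unfolding a'_def c'_def d'_def eqv
      using key'[of a c] key'[of a d] aU cU by (simp add: sa1 sa2)
    hence "eval B (\<lambda>w. if w \<in> X' then b' w else c' w) (lift m t)
         = eval B (\<lambda>w. if w \<in> X' then b' w else d' w) (lift m t)"
      by (rule tc_any[OF Cab algB wf_lift[OF wfm wf] U'])
    hence e: "eval ?A (\<lambda>v. if v \<in> X then b v else c v) t = eval ?A (\<lambda>v. if v \<in> X then b v else d v) t"
      unfolding b'_def c'_def d'_def eqv
      using key'[of b c] key'[of b d] aU cU by (simp add: sb1 sb2)
    have "eval ?A (\<lambda>v. if v \<in> X then b v else c v) t \<in> univ ?A"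
      by (rule eval_closed[OF clA _ wf]) (simp add: univ_tensor aU cU)
    with e show "(eval ?A (\<lambda>v. if v \<in> X then b v else c v) t,
                 eval ?A (\<lambda>v. if v \<in> X then b v else d v) t) \<in> zero_con ?A"
      by (simp add: zero_con_def Id_on_iff)
  qed
  have sub1: "tc_comm ar ?A (one_con ?A) (ker_proj ?A) \<subseteq> zero_con ?A"
    unfolding tc_comm_def by (rule Inter_lower) (simp add: cong0 cent)
  have sub2: "zero_con ?A \<subseteq> tc_comm ar ?A (one_con ?A) (ker_proj ?A)"
    unfolding tc_comm_def
  proof (rule Inter_greatest)
    fix \<delta> assume "\<delta> \<in> {\<delta>. congruence ar ?A \<delta> \<and> centralizes ar ?A (one_con ?A) (ker_proj ?A) \<delta>}"
    hence "refl_on (univ ?A) \<delta>" by (simp add: congruence_def equiv_def)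
    thus "zero_con ?A \<subseteq> \<delta>" unfolding zero_con_def refl_on_def by auto
  qed
  show ?thesis using sub1 sub2 by blast
qed

end
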